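(* Consider the sequences $(x_k),(y_k),(\nu_k),(\lambda_k)$ generated by Algorithm 2 (described in the context). Then: (a) for all $k\ge1$, $\ \frac{\lambda_kL}{2}\big\|\lambda_k(F(y_{k-1})+\nu_{k-1})+y_{k-1}-x_{k-1}\big\|\le\theta$; (b) for all $k\ge1$, $\ \frac{\lambda_kL}{2}\big\|\lambda_k(F(y_k)+\nu_k)+y_k-x_{k-1}\big\|\le\hat\theta$.
   Context: Setting: $\mathcal H$ real Hilbert space; $C\subseteq\mathcal H$ nonempty closed convex; $N_C(x)=\{\nu:\langle\nu,y-x\rangle\le0\ \forall y\in C\}$ if $x\in C$, $N_C(x)=\emptyset$ otherwise. $F:C\to\mathcal H$ is monotone, continuously differentiable, and $\|F'(x)-F'(y)\|\le L\|x-y\|$ for all $x,y\in C$, with $L>0$; the set of $x$ with $0\in F(x)+N_C(x)$ is nonempty. For $y\in C$, $F_y(x):=F(y)+F'(y)(x-y)$. Parameters: $0\le\hat\sigma<1/2$; $0<\theta<(1-\hat\sigma)(1-2\hat\sigma)$; $\hat\theta:=\theta\big(\frac{\hat\sigma}{1-\hat\sigma}+\frac{\theta}{(1-\hat\sigma)^2}\big)$; $\eta>2\hat\theta/L$; $\tau:=\dfrac{2(\theta-\hat\theta)}{2\theta+\frac{\eta L}{2}+\sqrt{(2\theta+\frac{\eta L}{2})^2-4\theta(\theta-\hat\theta)}}$. Algorithm 2: input $x_0\in C$, $y_0:=x_0$, $\nu_0:=0$, $\lambda_1>0$ with $\lambda_1^2\|F(y_0)\|\le2\theta/L$. For $k=1,2,\dots$: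 if $F(y_{k-1})+\nu_{k-1}=0$, stop and return $y_{k-1}$. If $\frac{\lambda_kL}{2}\|\lambda_k(F(y_{k-1})+\nu_{k-1})+y_{k-1}-x_{k-1}\|\le\hat\theta$, set $y_k=y_{k-1}$, $\nu_k=\nu_{k-1}$; otherwise find any $(y_k,\nu_k)$ with $\nu_k\in N_C(y_k)$ and $\|\lambda_k(F_{y_{k-1}}(y_k)+\nu_k)+y_k-x_{k-1}\|\le\hat\sigma\|y_k-y_{k-1}\|$. Then, if $\lambda_k\|y_k-x_{k-1}\|\ge\eta$, set $x_k=x_{k-1}-\tau\lambda_k(F(y_k)+\nu_k)$ and $\lambda_{k+1}=(1-\tau)\lambda_k$; else set $x_k=x_{k-1}$ and $\lambda_{k+1}=\lambda_k/(1-\tau)$. Standing assumption: the algorithm never stops at the first test, i.e. $F(y_{k-1})+\nu_{k-1}\neq0$ for all $k$. *)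

theory Defs
  imports "HOL-Analysis.Analysis"
begin

definition normal_cone :: "'a::real_inner set \<Rightarrow> 'a \<Rightarrow> 'a set" where
  "normal_cone C x = (if x \<in> C then {v. \<forall>y\<in>C. inner v (y - x) \<le> 0} else {})"

definition linearization :: "('a::real_vector \<Rightarrow> 'a) \<Rightarrow> ('a \<Rightarrow> 'a \<Rightarrow> 'a) \<Rightarrow> 'a \<Rightarrow> 'a \<Rightarrow> 'a" where
  "linearization F F' y x = F y + F' y (x - y)"

definition thetahat :: "real \<Rightarrow> real \<Rightarrow> real" where
  "thetahat \<sigma> \<theta> = \<theta> * (\<sigma> / (1 - \<sigma>) + \<theta> / (1 - \<sigma>)\<^sup>2)"

definition tau_param :: "real \<Rightarrow> real \<Rightarrow> real \<Rightarrow> real \<Rightarrow> real" where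
  "tau_param \<sigma> \<theta> \<eta> L =
     (let th = thetahat \<sigma> \<theta>; b = 2 * \<theta> + \<eta> * L / 2 in
      2 * (\<theta> - th) / (b + sqrt (b\<^sup>2 - 4 * \<theta> * (\<theta> - th))))"

text \<open>The sequences (x_k), (y_k), (nu_k), (lambda_k) are generated by Algorithm 2
  (with the standing assumption that the algorithm never stops).\<close>
definition algorithm2 ::
  "'a::real_inner set \<Rightarrow> ('a \<Rightarrow> 'a) \<Rightarrow> ('a \<Rightarrow> 'a \<Rightarrow> 'a) \<Rightarrow> real \<Rightarrow> real \<Rightarrow> real \<Rightarrow> real \<Rightarrow>
   (nat \<Rightarrow> 'a) \<Rightarrow> (nat \<Rightarrow> 'a) \<Rightarrow> (nat \<Rightarrow> 'a) \<Rightarrow> (nat \<Rightarrow> real) \<Rightarrow> bool" where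
  "algorithm2 C F F' L \<sigma> \<theta> \<eta> x y \<nu> lam \<longleftrightarrow>
     (let th = thetahat \<sigma> \<theta>; \<tau> = tau_param \<sigma> \<theta> \<eta> L in
      x 0 \<in> C \<and> y 0 = x 0 \<and> \<nu> 0 = 0 \<and> lam 1 > 0 \<and>
      (lam 1)\<^sup>2 * norm (F (y 0)) \<le> 2 * \<theta> / L \<and>
      (\<forall>k\<ge>1.
         F (y (k - 1)) + \<nu> (k - 1) \<noteq> 0 \<and>
         (if lam k * L / 2 * norm (lam k *\<^sub>R (F (y (k - 1)) + \<nu> (k - 1)) + y (k - 1) - x (k - 1)) \<le> th
          then y k = y (k - 1) \<and> \<nu> k = \<nu> (k - 1)
          else \<nu> k \<in> normal_cone C (y k) \<and>
               norm (lam k *\<^sub>R (linearization F F' (y (k - 1)) (y k) + \<nu> k) + y k - x (k - 1))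
                 \<le> \<sigma> * norm (y k - y (k - 1))) \<and>
         (if lam k * norm (y k - x (k - 1)) \<ge> \<eta>
          then x k = x (k - 1) - (\<tau> * lam k) *\<^sub>R (F (y k) + \<nu> k) \<and> lam (k + 1) = (1 - \<tau>) * lam k
          else x k = x (k - 1) \<and> lam (k + 1) = lam k / (1 - \<tau>))))"

end

theory Submission
  imports Defs
begin

lemma taylor_bound:
  fixes F :: "'a::{real_inner,complete_space} \<Rightarrow> 'a" and F' :: "'a \<Rightarrow> 'a \<Rightarrow> 'a"
  assumes cvx: "convex C" and u: "u \<in> C" and v: "v \<in> C"
    and der: "\<forall>w\<in>C. (F has_derivative F' w) (at w within C)"
    and lip: "\<forall>u\<in>C. \<forall>v\<in>C. onorm (\<lambda>h. F' u h - F' v h) \<le> L * norm (u - v)" and Lp: "L > 0"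
  shows "norm (F v - F u - F' u (v - u)) \<le> L / 2 * (norm (v - u))\<^sup>2"
proof -
  define h where "h = v - u"
  define p where "p t = u + t *\<^sub>R h" for t :: real
  have pC: "p t \<in> C" if "t \<in> {0..1}" for t
  proof -
    have "(1 - t) *\<^sub>R u + t *\<^sub>R v \<in> C" using that cvx u v by (auto intro: convexD)
    moreover have "(1 - t) *\<^sub>R u + t *\<^sub>R v = p t" by (simp add: p_def h_def algebra_simps)
    ultimately show ?thesis by simp
  qed
  have bl: "bounded_linear (F' w)" if "w \<in> C" for w
    using der that has_derivative_bounded_linear by blast
  define g where "g t = F (p t) - t *\<^sub>R F' u h" for t
  have gd: "(g has_vector_derivative (F' (p t) h - F' u h)) (at t within {0..1})" if t: "t \<in> {0..1}" for t
  proof -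
    have d1: "(p has_derivative (\<lambda>s. s *\<^sub>R h)) (at t within {0..1})"
      unfolding p_def by (auto intro!: derivative_eq_intros)
    have d2: "((\<lambda>t. F (p t)) has_derivative (\<lambda>s. F' (p t) (s *\<^sub>R h))) (at t within {0..1})"
      using der pC by (intro has_derivative_in_compose2[where t=C and g=F and g'=F', OF _ _ t d1]) auto
    have "((\<lambda>t. F (p t)) has_derivative (\<lambda>s. s *\<^sub>R F' (p t) h)) (at t within {0..1})"
      using d2 linear_cmul[OF bounded_linear.linear[OF bl[OF pC[OF t]]]] by simp
    then show ?thesis unfolding g_def has_vector_derivative_def
      by (auto intro!: derivative_eq_intros simp: algebra_simps)
  qed
  define e where "e = g 1 - g 0"
  define \<phi> where "\<phi> t = inner (g t) e" for t
  have \<phi>d: "(\<phi> has_vector_derivative inner (F' (p t) h - F' u h) e) (at t within {0..1})" if t: "t \<in> {0..1}" for t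
  proof -
    have "((\<lambda>t. inner (g t) e) has_derivative (\<lambda>s. inner (s *\<^sub>R (F' (p t) h - F' u h)) e)) (at t within {0..1})"
      using gd[OF t] unfolding has_vector_derivative_def
      by (intro bounded_linear.has_derivative[OF bounded_linear_inner_left]) auto
    then show ?thesis unfolding \<phi>_def has_vector_derivative_def by (simp add: inner_scaleR_left)
  qed
  have I1: "((\<lambda>t. inner (F' (p t) h - F' u h) e) has_integral (\<phi> 1 - \<phi> 0)) {0..1}"
    using fundamental_theorem_of_calculus[of 0 1 \<phi> "\<lambda>t. inner (F' (p t) h - F' u h) e"] \<phi>d by auto
  have I2: "((\<lambda>t. L * (norm h)\<^sup>2 * t) has_integral (L * (norm h)\<^sup>2 / 2 - 0)) {0..1}"
  proof -
    have "((\<lambda>t. L * (norm h)\<^sup>2 * t) has_integral ((\<lambda>t. L * (norm h)\<^sup>2 * t\<^sup>2 / 2) 1 - (\<lambda>t. L * (norm h)\<^sup>2 * t\<^sup>2 / 2) 0)) {0..1}"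
      by (rule fundamental_theorem_of_calculus) (auto intro!: derivative_eq_intros simp: has_real_derivative_iff_has_vector_derivative[symmetric])
    then show ?thesis by simp
  qed
  have bnd: "norm (F' (p t) h - F' u h) \<le> L * (norm h)\<^sup>2 * t" if t: "t \<in> {0..1}" for t
  proof -
    have "bounded_linear (\<lambda>k. F' (p t) k - F' u k)"
      using bl[OF pC[OF t]] bl[OF u] by (rule bounded_linear_sub)
    then have "norm (F' (p t) h - F' u h) \<le> onorm (\<lambda>k. F' (p t) k - F' u k) * norm h"
      by (rule onorm)
    also have "\<dots> \<le> L * norm (p t - u) * norm h"
      using lip pC[OF t] u by (intro mult_right_mono) auto
    also have "norm (p t - u) = t * norm h" using t by (simp add: p_def)
    finally show ?thesis by (simp add: power2_eq_square algebra_simps)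
  qed
  have "norm (\<phi> 1 - \<phi> 0) \<le> ((L * (norm h)\<^sup>2 / 2 - 0) * norm e) \<bullet> 1"
  proof (rule has_integral_norm_bound_integral_component[OF I1 has_integral_mult_left[OF I2]])
    fix t :: real assume t: "t \<in> {0..1}"
    have "norm (inner (F' (p t) h - F' u h) e) \<le> norm (F' (p t) h - F' u h) * norm e"
      by (simp add: Cauchy_Schwarz_ineq2)
    also have "\<dots> \<le> L * (norm h)\<^sup>2 * t * norm e" using bnd[OF t] by (simp add: mult_right_mono)
    finally show "norm (inner (F' (p t) h - F' u h) e) \<le> (L * (norm h)\<^sup>2 * t * norm e) \<bullet> 1" by simp
  qed
  moreover have "\<phi> 1 - \<phi> 0 = (norm e)\<^sup>2" by (simp add: \<phi>_def e_def inner_diff_left power2_norm_eq_inner)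
  ultimately have "(norm e)\<^sup>2 \<le> L * (norm h)\<^sup>2 / 2 * norm e" by simp
  then have "norm e \<le> L * (norm h)\<^sup>2 / 2"
    by (cases "norm e = 0") (use Lp in \<open>auto simp: power2_eq_square\<close>)
  moreover have "e = F v - F u - F' u (v - u)"
    by (simp add: e_def g_def p_def h_def)
  ultimately show ?thesis by (simp add: h_def)
qed

lemma psd_deriv:
  fixes F :: "'a::{real_inner,complete_space} \<Rightarrow> 'a" and F' :: "'a \<Rightarrow> 'a \<Rightarrow> 'a"
  assumes cvx: "convex C" and u: "u \<in> C" and v: "v \<in> C"
    and der: "\<forall>w\<in>C. (F has_derivative F' w) (at w within C)"
    and lip: "\<forall>u\<in>C. \<forall>v\<in>C. onorm (\<lambda>h. F' u h - F' v h) \<le> L * norm (u - v)" and Lp: "L > 0"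
    and mono: "\<forall>u\<in>C. \<forall>v\<in>C. inner (F u - F v) (u - v) \<ge> 0"
  shows "inner (F' u (v - u)) (v - u) \<ge> 0"
proof (rule ccontr)
  define h where "h = v - u"
  define q where "q = inner (F' u h) h"
  assume "\<not> ?thesis"
  then have q: "q < 0" by (simp add: q_def h_def)
  have lin: "linear (F' u)" using der u has_derivative_linear by blast
  have "h \<noteq> 0" using q lin by (auto simp: q_def linear_0)
  define N where "N = norm h"
  have N: "N > 0" using \<open>h \<noteq> 0\<close> by (simp add: N_def)
  define s where "s = min 1 (- q / (L * N^3))"
  have "- q / (L * N^3) > 0" using q N Lp by (intro divide_pos_pos) auto
  then have s0: "s > 0" by (simp add: s_def)
  have s1: "s \<le> 1" by (simp add: s_def)
  have sle: "s \<le> - q / (L * N^3)" by (simp add: s_def)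
  define w where "w = u + s *\<^sub>R h"
  have wC: "w \<in> C"
  proof -
    have "(1 - s) *\<^sub>R u + s *\<^sub>R v \<in> C" using s0 s1 cvx u v by (auto intro: convexD)
    moreover have "(1 - s) *\<^sub>R u + s *\<^sub>R v = w" by (simp add: w_def h_def algebra_simps)
    ultimately show ?thesis by simp
  qed
  define r where "r = F w - F u - F' u (w - u)"
  have rb: "norm r \<le> L / 2 * (norm (w - u))\<^sup>2"
    unfolding r_def by (rule taylor_bound[OF cvx u wC der lip Lp])
  have wu: "w - u = s *\<^sub>R h" by (simp add: w_def)
  have nwu: "norm (w - u) = s * N" using s0 by (simp add: wu N_def)
  have m: "inner (F w - F u) (w - u) \<ge> 0" using mono wC u by blast
  have "F w - F u = r + s *\<^sub>R F' u h" using lin by (simp add: r_def wu linear_cmul)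
  then have "inner (F w - F u) (w - u) = s * inner r h + s * s * q"
    by (simp add: wu q_def inner_add_left inner_scaleR_left inner_scaleR_right algebra_simps)
  with m have A: "0 \<le> s * inner r h + s * s * q" by simp
  have "inner r h \<le> norm r * N" unfolding N_def by (rule norm_cauchy_schwarz)
  then have B: "inner r h \<le> L / 2 * (s * N)\<^sup>2 * N"
    using rb nwu N by (smt (verit) mult_right_mono)
  have "0 \<le> s * (L / 2 * (s * N)\<^sup>2 * N) + s * s * q"
    using A B s0 by (smt (verit) mult_left_mono)
  then have "0 \<le> s * s * (L / 2 * s * N^3 + q)"
    by (simp add: power2_eq_square power3_eq_cube algebra_simps)
  then have C1: "0 \<le> L / 2 * s * N^3 + q" using s0
    by (metis mult_pos_pos zero_le_mult_iff not_le)
  have "L * N^3 * s \<le> L * N^3 * (- q / (L * N^3))" using sle Lp N by (intro mult_left_mono) auto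
  then have "L * N^3 * s \<le> - q" using Lp N by simp
  then show False using C1 q by (simp add: algebra_simps)
qed

lemma normal_cone_mono:
  assumes "a \<in> normal_cone C y" "b \<in> normal_cone C z"
  shows "inner (a - b) (y - z) \<ge> 0"
proof -
  have yz: "y \<in> C" "z \<in> C" using assms by (auto simp: normal_cone_def split: if_splits)
  have "inner a (z - y) \<le> 0" "inner b (y - z) \<le> 0"
    using assms yz by (auto simp: normal_cone_def)
  then show ?thesis by (smt (verit) inner_diff_left inner_diff_right inner_commute)
qed

lemma normal_cone_in: "a \<in> normal_cone C y \<Longrightarrow> y \<in> C"
  by (auto simp: normal_cone_def split: if_splits)

lemma params:
  assumes s0: "0 \<le> \<sigma>" and s1: "\<sigma> < 1/2" and t0: "0 < \<theta>" and t1: "\<theta> < (1 - \<sigma>) * (1 - 2 * \<sigma>)"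
    and Lp: "L > 0" and eta: "\<eta> > 2 * thetahat \<sigma> \<theta> / L"
  shows "0 \<le> thetahat \<sigma> \<theta>" "thetahat \<sigma> \<theta> < \<theta>" "0 < tau_param \<sigma> \<theta> \<eta> L" "tau_param \<sigma> \<theta> \<eta> L < 1"
    "thetahat \<sigma> \<theta> + tau_param \<sigma> \<theta> \<eta> L * \<eta> * L / 2 = \<theta> * (1 - tau_param \<sigma> \<theta> \<eta> L)\<^sup>2"
proof -
  define th where "th = thetahat \<sigma> \<theta>"
  have th0: "0 \<le> th" using s0 s1 t0 by (simp add: th_def thetahat_def)
  have "\<sigma> / (1 - \<sigma>) + \<theta> / (1 - \<sigma>)\<^sup>2 < 1"
  proof -
    have p: "(1 - \<sigma>)\<^sup>2 > 0" "1 - \<sigma> > 0" using s1 by auto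
    have "\<theta> / (1 - \<sigma>)\<^sup>2 < (1 - \<sigma>) * (1 - 2 * \<sigma>) / (1 - \<sigma>)\<^sup>2"
      using p t1 by (intro divide_strict_right_mono) auto
    also have "\<dots> = (1 - 2 * \<sigma>) / (1 - \<sigma>)" using p by (simp add: power2_eq_square)
    finally have "\<sigma> / (1 - \<sigma>) + \<theta> / (1 - \<sigma>)\<^sup>2 < \<sigma> / (1 - \<sigma>) + (1 - 2 * \<sigma>) / (1 - \<sigma>)" by simp
    also have "\<dots> = 1" using p by (simp add: add_divide_distrib[symmetric])
    finally show ?thesis .
  qed
  then have thl: "th < \<theta>" using t0 by (simp add: th_def thetahat_def)
  define b where "b = 2 * \<theta> + \<eta> * L / 2"
  define c where "c = \<theta> - th"
  have c0: "c > 0" using thl by (simp add: c_def)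
  have etap: "\<eta> > 0" using eta th0 Lp by (smt (verit) divide_nonneg_pos th_def)
  have bg: "b > 2 * \<theta>" using etap Lp by (simp add: b_def)
  define D where "D = b\<^sup>2 - 4 * \<theta> * c"
  have "b\<^sup>2 > (2*\<theta>)\<^sup>2" using bg t0 by (intro power_strict_mono) auto
  moreover have "4 * \<theta> * c \<le> (2*\<theta>)^2" using t0 th0 by (simp add: c_def power2_eq_square algebra_simps)
  ultimately have D0: "D > 0" by (simp add: D_def)
  define s where "s = sqrt D"
  have sp: "s > 0" using D0 by (simp add: s_def)
  have ss: "s * s = D" using D0 by (simp add: s_def)
  define \<tau> where "\<tau> = 2 * c / (b + s)"
  have tau_eq: "tau_param \<sigma> \<theta> \<eta> L = \<tau>"
    by (simp add: tau_param_def Let_def \<tau>_def c_def th_def b_def s_def D_def)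
  have bs: "b + s > 0" using bg t0 sp by simp
  have tp: "\<tau> > 0" using c0 bs by (simp add: \<tau>_def)
  have "2 * c < b + s" using bg sp thl th0 by (simp add: c_def)
  then have t1': "\<tau> < 1" using bs by (simp add: \<tau>_def)
  have quad: "\<theta> * \<tau>\<^sup>2 - b * \<tau> + c = 0"
  proof -
    have e: "\<tau> * (b + s) = 2 * c" using bs by (simp add: \<tau>_def)
    have "(\<theta> * \<tau>\<^sup>2 - b * \<tau> + c) * (b + s)\<^sup>2 = \<theta> * (\<tau> * (b + s))\<^sup>2 - b * (\<tau> * (b + s)) * (b + s) + c * (b + s)\<^sup>2"
      by (simp add: power2_eq_square algebra_simps)
    also have "\<dots> = \<theta> * (2 * c)\<^sup>2 - b * (2 * c) * (b + s) + c * (b + s)\<^sup>2" by (simp only: e)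
    also have "\<dots> = c * (4 * \<theta> * c - b * b + s * s)" by (simp add: power2_eq_square algebra_simps)
    also have "\<dots> = 0" using ss by (simp add: D_def power2_eq_square)
    finally have "(\<theta> * \<tau>\<^sup>2 - b * \<tau> + c) * (b + s)\<^sup>2 = 0" .
    then show ?thesis using bs by simp
  qed
  show "0 \<le> thetahat \<sigma> \<theta>" "thetahat \<sigma> \<theta> < \<theta>" using th0 thl by (auto simp: th_def)
  show "0 < tau_param \<sigma> \<theta> \<eta> L" "tau_param \<sigma> \<theta> \<eta> L < 1" using tp t1' tau_eq by auto
  show "thetahat \<sigma> \<theta> + tau_param \<sigma> \<theta> \<eta> L * \<eta> * L / 2 = \<theta> * (1 - tau_param \<sigma> \<theta> \<eta> L)\<^sup>2"
    using quad unfolding tau_eq th_def[symmetric]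
    by (simp add: b_def c_def power2_eq_square algebra_simps)
qed

lemma A_large:
  fixes v x0 yk :: "'a::real_normed_vector"
  assumes B: "l * L / 2 * norm (l *\<^sub>R v + yk - x0) \<le> th"
    and t0: "0 < \<tau>" and t1: "\<tau> < 1" and th0: "0 \<le> th" and thl: "th < \<theta>"
  shows "((1 - \<tau>) * l) * L / 2 * norm (((1 - \<tau>) * l) *\<^sub>R v + yk - (x0 - (\<tau> * l) *\<^sub>R v)) \<le> \<theta>"
proof -
  have E: "((1 - \<tau>) * l) *\<^sub>R v + yk - (x0 - (\<tau> * l) *\<^sub>R v) = l *\<^sub>R v + yk - x0"
    by (simp add: algebra_simps)
  have "((1 - \<tau>) * l) * L / 2 * norm (l *\<^sub>R v + yk - x0) = (1 - \<tau>) * (l * L / 2 * norm (l *\<^sub>R v + yk - x0))"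
    by simp
  also have "\<dots> \<le> (1 - \<tau>) * th" using B t1 by (intro mult_left_mono) auto
  also have "\<dots> \<le> th" using t0 th0 by (simp add: algebra_simps)
  finally show ?thesis unfolding E using thl by linarith
qed

lemma A_small:
  fixes v x0 yk :: "'a::real_normed_vector"
  assumes B: "l * L / 2 * norm (l *\<^sub>R v + yk - x0) \<le> th"
    and t0: "0 < \<tau>" and t1: "\<tau> < 1" and l0: "l > 0" and Lp: "L > 0"
    and small: "\<not> l * norm (yk - x0) \<ge> \<eta>"
    and eq: "th + \<tau> * \<eta> * L / 2 = \<theta> * (1 - \<tau>)\<^sup>2"
  shows "(l / (1 - \<tau>)) * L / 2 * norm ((l / (1 - \<tau>)) *\<^sub>R v + yk - x0) \<le> \<theta>"
proof -
  define w where "w = yk - x0"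
  define c where "c = 1 - \<tau>"
  have c0: "c > 0" using t1 by (simp add: c_def)
  have a1: "1 / c - \<tau> / c = 1" using c0 by (simp add: c_def diff_divide_distrib[symmetric])
  have "(1 / c) *\<^sub>R (l *\<^sub>R v + w) - (\<tau> / c) *\<^sub>R w
      = (l / c) *\<^sub>R v + ((1 / c) *\<^sub>R w - (\<tau> / c) *\<^sub>R w)"
    by (simp add: scaleR_add_right)
  also have "(1 / c) *\<^sub>R w - (\<tau> / c) *\<^sub>R w = (1 / c - \<tau> / c) *\<^sub>R w"
    by (rule scaleR_diff_left[symmetric])
  also have "\<dots> = w" by (simp only: a1 scaleR_one)
  finally have E: "(l / c) *\<^sub>R v + yk - x0 = (1 / c) *\<^sub>R (l *\<^sub>R v + w) - (\<tau> / c) *\<^sub>R w"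
    by (simp add: w_def)
  have ab: "\<bar>1 / c\<bar> = 1 / c" "\<bar>\<tau> / c\<bar> = \<tau> / c" using c0 t0 by auto
  have N: "norm ((l / c) *\<^sub>R v + yk - x0) \<le> (1 / c) * norm (l *\<^sub>R v + w) + (\<tau> / c) * norm w"
    using norm_triangle_ineq4[of "(1 / c) *\<^sub>R (l *\<^sub>R v + w)" "(\<tau> / c) *\<^sub>R w"]
    unfolding E by (simp only: norm_scaleR ab)
  have M0: "(l / c) * L / 2 \<ge> 0" using l0 c0 Lp by simp
  have "(l / c) * L / 2 * norm ((l / c) *\<^sub>R v + yk - x0)
      \<le> (l / c) * L / 2 * ((1 / c) * norm (l *\<^sub>R v + w) + (\<tau> / c) * norm w)"
    using N M0 by (rule mult_left_mono)
  also have "\<dots> = ((l * L / 2 * norm (l *\<^sub>R v + w)) + \<tau> * L / 2 * (l * norm w)) / c\<^sup>2"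
    using c0 by (simp add: field_simps power2_eq_square)
  also have "\<dots> \<le> (th + \<tau> * L / 2 * \<eta>) / c\<^sup>2"
  proof -
    have "l *\<^sub>R v + w = l *\<^sub>R v + yk - x0" by (simp add: w_def algebra_simps)
    then have "l * L / 2 * norm (l *\<^sub>R v + w) \<le> th" using B by (simp only:)
    moreover have "\<tau> * L / 2 * (l * norm w) \<le> \<tau> * L / 2 * \<eta>"
      using small t0 Lp by (intro mult_left_mono) (auto simp: w_def)
    ultimately show ?thesis using c0 by (intro divide_right_mono) auto
  qed
  also have "th + \<tau> * L / 2 * \<eta> = \<theta> * c\<^sup>2" using eq by (simp add: c_def algebra_simps)
  also have "\<theta> * c\<^sup>2 / c\<^sup>2 = \<theta>" using c0 by simp
  finally show ?thesis by (simp add: c_def)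
qed

lemma step_b:
  fixes F :: "'a::{real_inner,complete_space} \<Rightarrow> 'a" and F' :: "'a \<Rightarrow> 'a \<Rightarrow> 'a"
  assumes cvx: "convex C"
    and der: "\<forall>w\<in>C. (F has_derivative F' w) (at w within C)"
    and lip: "\<forall>u\<in>C. \<forall>v\<in>C. onorm (\<lambda>h. F' u h - F' v h) \<le> L * norm (u - v)" and Lp: "L > 0"
    and mono: "\<forall>u\<in>C. \<forall>v\<in>C. inner (F u - F v) (u - v) \<ge> 0"
    and lam: "lam > 0" and no: "no \<in> normal_cone C y" and nk: "nk \<in> normal_cone C yk"
    and inex: "norm (lam *\<^sub>R (linearization F F' y yk + nk) + yk - x) \<le> \<sigma> * norm (yk - y)"
    and s0: "0 \<le> \<sigma>" and s1: "\<sigma> < 1"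
    and ta: "lam * L / 2 * norm (lam *\<^sub>R (F y + no) + y - x) \<le> \<theta>"
  shows "lam * L / 2 * norm (lam *\<^sub>R (F yk + nk) + yk - x) \<le> thetahat \<sigma> \<theta>"
proof -
  have y: "y \<in> C" and yk: "yk \<in> C" using no nk by (auto intro: normal_cone_in)
  define a where "a = lam *\<^sub>R (F y + no) + y - x"
  define e where "e = lam *\<^sub>R (linearization F F' y yk + nk) + yk - x"
  define d where "d = norm (yk - y)"
  define r where "r = e - a"
  have r_eq: "r = lam *\<^sub>R F' y (yk - y) + lam *\<^sub>R (nk - no) + (yk - y)"
    by (simp add: r_def e_def a_def linearization_def algebra_simps)
  have p1: "inner (F' y (yk - y)) (yk - y) \<ge> 0" by (rule psd_deriv[OF cvx y yk der lip Lp mono])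
  have p2: "inner (nk - no) (yk - y) \<ge> 0" by (rule normal_cone_mono[OF nk no])
  have "inner r (yk - y) = lam * inner (F' y (yk - y)) (yk - y) + lam * inner (nk - no) (yk - y) + d\<^sup>2"
    by (simp add: r_eq d_def inner_add_left inner_scaleR_left power2_norm_eq_inner)
  then have "inner r (yk - y) \<ge> d\<^sup>2" using p1 p2 lam by (smt (verit) mult_nonneg_nonneg)
  moreover have "inner r (yk - y) \<le> norm r * d" unfolding d_def by (rule norm_cauchy_schwarz)
  moreover have "norm r \<le> \<sigma> * d + norm a"
    using inex norm_triangle_ineq4[of e a] by (simp add: r_def e_def d_def)
  ultimately have "d * d \<le> (\<sigma> * d + norm a) * d"
    by (smt (verit) d_def mult_right_mono norm_ge_zero power2_eq_square)
  then have "d \<le> \<sigma> * d + norm a"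
    by (cases "d = 0") (auto simp: d_def)
  then have dle: "(1 - \<sigma>) * d \<le> norm a" by (simp add: algebra_simps)
  define M where "M = lam * L / 2"
  have M0: "M > 0" using lam Lp by (simp add: M_def)
  define b where "b = lam *\<^sub>R (F yk + nk) + yk - x"
  have "b = e + lam *\<^sub>R (F yk - F y - F' y (yk - y))"
    by (simp add: b_def e_def linearization_def algebra_simps)
  then have "norm b \<le> norm e + lam * norm (F yk - F y - F' y (yk - y))"
    using norm_triangle_ineq[of e "lam *\<^sub>R (F yk - F y - F' y (yk - y))"] lam by simp
  also have "\<dots> \<le> \<sigma> * d + lam * (L / 2 * d\<^sup>2)"
    using inex taylor_bound[OF cvx y yk der lip Lp] lam
    by (intro add_mono mult_left_mono) (auto simp: e_def d_def)
  finally have nb: "norm b \<le> \<sigma> * d + lam * (L / 2 * d\<^sup>2)" .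
  have "M * norm b \<le> M * (\<sigma> * d + lam * (L / 2 * d\<^sup>2))" using nb M0 by simp
  also have "\<dots> = \<sigma> * (M * d) + (M * d)\<^sup>2" by (simp add: M_def power2_eq_square algebra_simps)
  finally have Mb: "M * norm b \<le> \<sigma> * (M * d) + (M * d)\<^sup>2" .
  have "(1 - \<sigma>) * (M * d) \<le> M * norm a" using dle M0 by (smt (verit) mult_left_mono mult.left_commute)
  also have "M * norm a \<le> \<theta>" using ta by (simp add: M_def a_def)
  finally have "(1 - \<sigma>) * (M * d) \<le> \<theta>" .
  then have Md: "M * d \<le> \<theta> / (1 - \<sigma>)" using s1 by (simp add: field_simps)
  have Md0: "0 \<le> M * d" using M0 by (simp add: d_def)
  have "\<sigma> * (M * d) + (M * d)\<^sup>2 \<le> \<sigma> * (\<theta> / (1 - \<sigma>)) + (\<theta> / (1 - \<sigma>))\<^sup>2"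
    using Md Md0 s0 by (intro add_mono mult_left_mono power_mono) auto
  also have "\<dots> = thetahat \<sigma> \<theta>" by (simp add: thetahat_def power2_eq_square algebra_simps)
  finally show ?thesis using Mb by (simp add: M_def b_def)
qed

theorem proposition4p3:
  fixes C :: "'a::{real_inner, complete_space} set"
    and F :: "'a \<Rightarrow> 'a" and F' :: "'a \<Rightarrow> 'a \<Rightarrow> 'a"
    and L \<sigma> \<theta> \<eta> :: real
    and x y \<nu> :: "nat \<Rightarrow> 'a" and lam :: "nat \<Rightarrow> real"
  assumes C_ne: "C \<noteq> {}" and C_closed: "closed C" and C_convex: "convex C"
    and F_mono: "\<forall>u\<in>C. \<forall>v\<in>C. inner (F u - F v) (u - v) \<ge> 0"
    and F_deriv: "\<forall>u\<in>C. (F has_derivative F' u) (at u within C)"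
    and F'_cont: "continuous_on C (\<lambda>u. Blinfun (F' u))"
    and F'_lip: "\<forall>u\<in>C. \<forall>v\<in>C. onorm (\<lambda>h. F' u h - F' v h) \<le> L * norm (u - v)"
    and L_pos: "L > 0"
    and sol: "\<exists>u\<in>C. - F u \<in> normal_cone C u"
    and \<sigma>_ge: "0 \<le> \<sigma>" and \<sigma>_lt: "\<sigma> < 1/2"
    and \<theta>_pos: "0 < \<theta>" and \<theta>_lt: "\<theta> < (1 - \<sigma>) * (1 - 2 * \<sigma>)"
    and \<eta>_gt: "\<eta> > 2 * thetahat \<sigma> \<theta> / L"
    and alg: "algorithm2 C F F' L \<sigma> \<theta> \<eta> x y \<nu> lam"
  shows "\<forall>k\<ge>1.
     lam k * L / 2 * norm (lam k *\<^sub>R (F (y (k - 1)) + \<nu> (k - 1)) + y (k - 1) - x (k - 1)) \<le> \<theta> \<and>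
     lam k * L / 2 * norm (lam k *\<^sub>R (F (y k) + \<nu> k) + y k - x (k - 1)) \<le> thetahat \<sigma> \<theta>"
proof -
  define th where "th = thetahat \<sigma> \<theta>"
  define \<tau> where "\<tau> = tau_param \<sigma> \<theta> \<eta> L"
  note P = params[OF \<sigma>_ge \<sigma>_lt \<theta>_pos \<theta>_lt L_pos \<eta>_gt, folded th_def \<tau>_def]
  have init: "x 0 \<in> C" "y 0 = x 0" "\<nu> 0 = 0" "lam 1 > 0" "(lam 1)\<^sup>2 * norm (F (y 0)) \<le> 2 * \<theta> / L"
    using alg by (auto simp: algorithm2_def Let_def)
  have stepk: "(if lam (Suc n) * L / 2 * norm (lam (Suc n) *\<^sub>R (F (y n) + \<nu> n) + y n - x n) \<le> th
          then y (Suc n) = y n \<and> \<nu> (Suc n) = \<nu> n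
          else \<nu> (Suc n) \<in> normal_cone C (y (Suc n)) \<and>
               norm (lam (Suc n) *\<^sub>R (linearization F F' (y n) (y (Suc n)) + \<nu> (Suc n)) + y (Suc n) - x n)
                 \<le> \<sigma> * norm (y (Suc n) - y n)) \<and>
         (if lam (Suc n) * norm (y (Suc n) - x n) \<ge> \<eta>
          then x (Suc n) = x n - (\<tau> * lam (Suc n)) *\<^sub>R (F (y (Suc n)) + \<nu> (Suc n)) \<and> lam (Suc (Suc n)) = (1 - \<tau>) * lam (Suc n)
          else x (Suc n) = x n \<and> lam (Suc (Suc n)) = lam (Suc n) / (1 - \<tau>))" for n
  proof -
    have "\<forall>k\<ge>1. (if lam k * L / 2 * norm (lam k *\<^sub>R (F (y (k - 1)) + \<nu> (k - 1)) + y (k - 1) - x (k - 1)) \<le> th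
          then y k = y (k - 1) \<and> \<nu> k = \<nu> (k - 1)
          else \<nu> k \<in> normal_cone C (y k) \<and>
               norm (lam k *\<^sub>R (linearization F F' (y (k - 1)) (y k) + \<nu> k) + y k - x (k - 1))
                 \<le> \<sigma> * norm (y k - y (k - 1))) \<and>
         (if lam k * norm (y k - x (k - 1)) \<ge> \<eta>
          then x k = x (k - 1) - (\<tau> * lam k) *\<^sub>R (F (y k) + \<nu> k) \<and> lam (k + 1) = (1 - \<tau>) * lam k
          else x k = x (k - 1) \<and> lam (k + 1) = lam k / (1 - \<tau>))"
      using alg unfolding algorithm2_def Let_def th_def \<tau>_def by blast
    note h = mp[OF this[THEN spec[where x="Suc n"]]]
    have "1 \<le> Suc n" by simp
    from h[OF this] show ?thesis by (simp only: diff_Suc_1 Suc_eq_plus1[symmetric])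
  qed
  have lampos: "lam (Suc n) > 0" for n
  proof (induction n)
    case 0 then show ?case using init by simp
  next
    case (Suc n)
    then show ?case using stepk[of n] P by (auto split: if_splits)
  qed
  have inv: "\<nu> n \<in> normal_cone C (y n)" for n
  proof (induction n)
    case 0 then show ?case using init by (simp add: normal_cone_def)
  next
    case (Suc n)
    then show ?case using stepk[of n] by (auto split: if_splits)
  qed
  have BfromA: "lam (Suc n) * L / 2 * norm (lam (Suc n) *\<^sub>R (F (y (Suc n)) + \<nu> (Suc n)) + y (Suc n) - x n) \<le> th"
    if A: "lam (Suc n) * L / 2 * norm (lam (Suc n) *\<^sub>R (F (y n) + \<nu> n) + y n - x n) \<le> \<theta>" for n
  proof (cases "lam (Suc n) * L / 2 * norm (lam (Suc n) *\<^sub>R (F (y n) + \<nu> n) + y n - x n) \<le> th")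
    case True
    then show ?thesis using stepk[of n] by simp
  next
    case False
    then have "\<nu> (Suc n) \<in> normal_cone C (y (Suc n))"
      "norm (lam (Suc n) *\<^sub>R (linearization F F' (y n) (y (Suc n)) + \<nu> (Suc n)) + y (Suc n) - x n)
                 \<le> \<sigma> * norm (y (Suc n) - y n)" using stepk[of n] by auto
    then show ?thesis unfolding th_def
      by (intro step_b[OF C_convex F_deriv F'_lip L_pos F_mono lampos inv]) (use \<sigma>_ge \<sigma>_lt A in auto)
  qed
  have Aall: "lam (Suc n) * L / 2 * norm (lam (Suc n) *\<^sub>R (F (y n) + \<nu> n) + y n - x n) \<le> \<theta>" for n
  proof (induction n)
    case 0
    have "lam 1 * L / 2 * norm (lam 1 *\<^sub>R (F (y 0) + \<nu> 0) + y 0 - x 0) = L / 2 * ((lam 1)\<^sup>2 * norm (F (y 0)))"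
      using init by (simp add: power2_eq_square algebra_simps)
    also have "\<dots> \<le> L / 2 * (2 * \<theta> / L)" using init L_pos by (intro mult_left_mono) auto
    also have "\<dots> = \<theta>" using L_pos by simp
    finally show ?case by simp
  next
    case (Suc n)
    define l where "l = lam (Suc n)"
    define v where "v = F (y (Suc n)) + \<nu> (Suc n)"
    have B: "l * L / 2 * norm (l *\<^sub>R v + y (Suc n) - x n) \<le> th"
      using BfromA[OF Suc.IH] unfolding l_def v_def .
    note S2 = conjunct2[OF stepk[of n], folded l_def v_def]
    have l0: "l > 0" using lampos by (simp add: l_def)
    show ?case
    proof (cases "\<eta> \<le> l * norm (y (Suc n) - x n)")
      case True
      note H = S2[unfolded if_P[OF True]]
      show ?thesis unfolding conjunct1[OF H] conjunct2[OF H] v_def[symmetric]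
        by (rule A_large[OF B P(3) P(4) P(1) P(2)])
    next
      case False
      note H = S2[unfolded if_not_P[OF False]]
      show ?thesis unfolding conjunct1[OF H] conjunct2[OF H] v_def[symmetric]
        by (rule A_small[OF B P(3) P(4) l0 L_pos False]) (use P(5) in \<open>simp add: algebra_simps\<close>)
    qed
  qed
  show ?thesis
  proof (intro allI impI)
    fix k :: nat assume "k \<ge> 1"
    then obtain n where k: "k = Suc n" by (cases k) auto
    show "lam k * L / 2 * norm (lam k *\<^sub>R (F (y (k - 1)) + \<nu> (k - 1)) + y (k - 1) - x (k - 1)) \<le> \<theta> \<and>
     lam k * L / 2 * norm (lam k *\<^sub>R (F (y k) + \<nu> k) + y k - x (k - 1)) \<le> thetahat \<sigma> \<theta>"
      using Aall[of n] BfromA[OF Aall[of n]] by (simp add: k th_def)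
  qed
qed

end
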